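(* Consider a family, indexed by integers $m\ge 2$, of normalized $2^m$-APSK constellations $\mathcal{X}_m$ with $K_m$ rings, and let $\mathsf{X}$ (depending on $m$) be uniformly distributed over $\mathcal{X}_m$. Suppose that, with all implied constants independent of $m$ and $k$: (1) the number of rings satisfies $K_m=\Theta(\sqrt{2^m})$; (2) the pre-normalization radii $\widetilde r_1,\dots,\widetilde r_{K_m}$ satisfy $\widetilde r_k=\Theta(k/\sqrt{2^m})$ for $1\le k\le K_m$ and $\widetilde r_{k+1}-\widetilde r_k=\Theta(1/\sqrt{2^m})$ for $1\le k\le K_m-1$; (3) the numbers of points per ring are $N_k=a_m k$ for $1\le k\le K_m-1$ and $N_{K_m}=2^m-\sum_{i=1}^{K_m-1}N_i$, where the positive integer $a_m$ is chosen so that $N_{K_m}>0$ and $N_{K_m}=\Theta(K_m)$; (4) the phase offsets are aligned across rings: $\phi_{k+1}-\phi_k=0$ for $1\le k\le K_m-1$. Then $d_{\min}^2(\mathsf{X})=\Theta(2^{-m})$.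
   Context: A $2^m$-APSK constellation ($m\ge 2$) with $K_m$ rings is a set $$\mathcal{X}=\bigcup_{k=1}^{K_m}\left\{ r_k e^{j(\phi_k+2\pi n/N_k)} : n=0,1,\dots,N_k-1\right\}\subset\mathbb{C},$$ where $N_k\ge1$ is the number of points on ring $k$, $\sum_k N_k=2^m$, $r_k>0$ the ring radius and $\phi_k$ the phase offset. The normalized radii are obtained from pre-normalization radii $\widetilde r_k$ by $r_k=\widetilde r_k/\sqrt{E_0}$ with $E_0=\frac{1}{2^m}\sum_{k=1}^{K_m}N_k\widetilde r_k^2$, so that $\frac{1}{2^m}\sum_{x\in\mathcal{X}}|x|^2=1$. For $\mathsf{X}$ uniform on $\mathcal{X}$, $d_{\min}(\mathsf{X})$ is the minimum Euclidean distance between distinct points of $\mathcal{X}$. The notation $f=\Theta(g)$ means $c_1 g\le f\le c_2 g$ for positive constants $c_1,c_2$ independent of $m$ (and $k$). *)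

theory Defs
  imports "HOL-Analysis.Analysis"
begin

definition apsk :: "nat \<Rightarrow> (nat \<Rightarrow> nat) \<Rightarrow> (nat \<Rightarrow> real) \<Rightarrow> (nat \<Rightarrow> real) \<Rightarrow> complex set" where
  "apsk K N r phi =
     (\<Union>k\<in>{1..K}. {complex_of_real (r k) * cis (phi k + 2 * pi * real n / real (N k)) | n. n < N k})"

definition apsk_E0 :: "nat \<Rightarrow> nat \<Rightarrow> (nat \<Rightarrow> nat) \<Rightarrow> (nat \<Rightarrow> real) \<Rightarrow> real" where
  "apsk_E0 m K N rt = (1 / 2 ^ m) * (\<Sum>k=1..K. real (N k) * (rt k)\<^sup>2)"

definition apsk_radii :: "nat \<Rightarrow> nat \<Rightarrow> (nat \<Rightarrow> nat) \<Rightarrow> (nat \<Rightarrow> real) \<Rightarrow> nat \<Rightarrow> real" where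
  "apsk_radii m K N rt k = rt k / sqrt (apsk_E0 m K N rt)"

definition dmin :: "complex set \<Rightarrow> real" where
  "dmin X = Inf {cmod (x - y) | x y. x \<in> X \<and> y \<in> X \<and> x \<noteq> y}"

definition ring_sizes :: "nat \<Rightarrow> nat \<Rightarrow> nat \<Rightarrow> nat \<Rightarrow> nat" where
  "ring_sizes m K a k = (if k < K then a * k else 2 ^ m - (\<Sum>i=1..<K. a * i))"

end

theory Submission
  imports Defs
begin


lemma sin_lower: assumes "0 \<le> x" "x \<le> pi/2" shows "x/3 \<le> sin x"
proof -
  have b: "\<bar>sin x - (\<Sum>m<3. sin_coeff m * x ^ m)\<bar> \<le> inverse (fact 3) * \<bar>x\<bar> ^ 3"
    by (rule Maclaurin_sin_bound)
  have s: "(\<Sum>m<3. sin_coeff m * x ^ m) = x"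
    by (simp add: eval_nat_numeral sin_coeff_def)
  have "x \<le> 2" using assms pi_less_4 by linarith
  hence "x^2 \<le> 2^2" using assms power_mono[of x 2 2] by simp
  hence "x * x^2 \<le> x * 4" using assms mult_left_mono[of "x^2" 4 x] by simp
  hence c: "x^3 \<le> 4 * x" by (simp add: power3_eq_cube power2_eq_square mult.commute)
  have d: "\<bar>sin x - x\<bar> * 6 \<le> x^3" using b s assms by (simp add: fact_numeral)
  have e: "\<bar>sin x - x\<bar> * 6 \<le> 4 * x" using c d by (rule order_trans[rotated])
  have "x - sin x \<le> \<bar>sin x - x\<bar>" by simp
  thus ?thesis using e by (simp add: abs_if split: if_splits)
qed

lemma sin_int_lower:
  fixes d :: int and N :: nat
  assumes "0 < \<bar>d\<bar>" "\<bar>d\<bar> < int N"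
  shows "1 / real N \<le> \<bar>sin (pi * real_of_int d / real N)\<bar>"
proof -
  have key: "1 / real N \<le> \<bar>sin (pi * real e / real N)\<bar>" if "0 < e" "e < N" for e :: nat
  proof (cases "2 * e \<le> N")
    case True
    have "pi * real e / real N \<le> pi / 2" using True that
      by (simp add: field_simps)
    moreover have "0 \<le> pi * real e / real N" by simp
    ultimately have "pi * real e / real N / 3 \<le> sin (pi * real e / real N)" using sin_lower by blast
    moreover have pe: "3 \<le> pi * real e"
    proof -
      have "pi*1 \<le> pi * real e" using that by (intro mult_left_mono) auto
      thus ?thesis using pi_gt3 by linarith
    qed
    moreover have "1 / real N \<le> pi * real e / real N / 3"
      using that pi_gt3 pe by (simp add: field_simps)
    ultimately show ?thesis by linarith
  next
    case False
    define f where "f = N - e"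
    have f: "0 < f" "2 * f \<le> N" "real e = real N - real f" using False that by (auto simp: f_def)
    have pN: "pi * real e + pi * real f = pi * real N" using f(3) by (simp add: distrib_left[symmetric])
    have "pi * real e / real N = pi - pi * real f / real N" using pN that by (simp add: field_simps)
    hence eq: "sin (pi * real e / real N) = sin (pi * real f / real N)" by simp
    have "pi * real f / real N \<le> pi / 2" using f that
      by (simp add: field_simps)
    moreover have "0 \<le> pi * real f / real N" by simp
    ultimately have "pi * real f / real N / 3 \<le> sin (pi * real f / real N)" using sin_lower by blast
    moreover have pf: "3 \<le> pi * real f"
    proof -
      have "pi*1 \<le> pi * real f" using f by (intro mult_left_mono) auto
      thus ?thesis using pi_gt3 by linarith
    qed
    moreover have "1 / real N \<le> pi * real f / real N / 3"
      using f that pi_gt3 pf by (simp add: field_simps)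
    ultimately show ?thesis using eq by linarith
  qed
  show ?thesis
  proof (cases "d > 0")
    case True
    have r: "real (nat d) = real_of_int d" using True by simp
    have "0 < nat d" "nat d < N" using True assms by auto
    then show ?thesis using key[of "nat d"] r by simp
  next
    case False
    have r: "real (nat (-d)) = - real_of_int d" using False by simp
    have "0 < nat (-d)" "nat (-d) < N" using False assms by auto
    hence k: "1 / real N \<le> \<bar>sin (pi * real (nat (-d)) / real N)\<bar>" by (rule key)
    have "pi * real (nat (-d)) / real N = - (pi * real_of_int d / real N)" using r by simp
    hence "\<bar>sin (pi * real (nat (-d)) / real N)\<bar> = \<bar>sin (pi * real_of_int d / real N)\<bar>"
      by (simp only: sin_minus abs_minus_cancel)
    then show ?thesis using k by simp
  qed
qed

lemma cis_diff_norm: "cmod (cis a - cis b) = 2 * \<bar>sin ((a - b) / 2)\<bar>"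
proof -
  have "(cmod (cis a - cis b))^2 = (cos a - cos b)^2 + (sin a - sin b)^2"
    by (simp add: cmod_power2 cis.code)
  also have "\<dots> = 2 - 2 * cos (a - b)"
    by (simp add: power2_diff cos_diff algebra_simps)
  also have "\<dots> = (2 * \<bar>sin ((a - b) / 2)\<bar>)^2"
  proof -
    have "cos (a-b) = 1 - 2*(sin((a-b)/2))^2" by (metis cos_double_sin mult_2 field_sum_of_halves)
    then show ?thesis by (simp add: power_mult_distrib)
  qed
  finally have h: "(cmod (cis a - cis b))^2 = (2 * \<bar>sin ((a - b) / 2)\<bar>)^2" .
  show ?thesis using power2_eq_iff_nonneg[of "cmod (cis a - cis b)" "2 * \<bar>sin ((a - b) / 2)\<bar>"] h by simp
qed



lemma gauss2: "2 * (\<Sum>i=1..<K. i) = K * (K - 1 :: nat)"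
proof (induction K)
  case 0 then show ?case by simp
next
  case (Suc K)
  show ?case
  proof (cases "K = 0")
    case True then show ?thesis by simp
  next
    case False
    have "(\<Sum>i=1..<Suc K. i) = (\<Sum>i=1..<K. i) + K" using False by simp
    then show ?thesis using Suc False by (cases K) (auto simp: algebra_simps)
  qed
qed

lemma cubes4: "4 * (\<Sum>k=1..<Suc n. k^3) = (n * (n + 1 :: nat))^2"
proof (induction n)
  case 0 then show ?case by simp
next
  case (Suc n)
  have "4 * (\<Sum>k=1..<Suc (Suc n). k^3) = 4 * (\<Sum>k=1..<Suc n. k^3) + 4 * (Suc n)^3" by simp
  also have "\<dots> = (n * (n + 1))^2 + 4 * (Suc n)^3" using Suc by simp
  also have "\<dots> = (Suc n * (Suc n + 1))^2" by (simp add: power2_eq_square power3_eq_cube algebra_simps)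
  finally show ?case .
qed

lemma quart: assumes "(1::nat) \<le> K" shows "K^4 \<le> 64 * ((\<Sum>k=1..<K. k^3) + K^2)"
proof -
  obtain n where n: "K = Suc n" using assms by (cases K) auto
  have c: "4 * (\<Sum>k=1..<K. k^3) = (n * (n + 1))^2" using cubes4 n by simp
  have nn: "n + n \<le> 63 + n*(n*15)" by (cases n) auto
  have "(n+1)^2 \<le> 16 * n^2 + 64" using nn by (simp add: power2_eq_square algebra_simps)
  hence "(n+1)^2 * (n+1)^2 \<le> (16 * n^2 + 64) * (n+1)^2" by (rule mult_right_mono) simp
  also have "\<dots> = 16 * (n * (n + 1))^2 + 64 * (n+1)^2" by (simp add: power_mult_distrib[symmetric] algebra_simps)
  also have "\<dots> = 64 * ((\<Sum>k=1..<K. k^3) + K^2)" using c n by simp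
  finally show ?thesis using n by (simp add: power_add[symmetric])
qed

lemma sumN:
  assumes "1 \<le> K" "(\<Sum>i=1..<K. a * i) \<le> 2^m"
  shows "(\<Sum>k=1..K. ring_sizes m K a k) = 2^m"
proof -
  have "{1..K} = insert K {1..<K}" using assms by auto
  hence "(\<Sum>k=1..K. ring_sizes m K a k) = ring_sizes m K a K + (\<Sum>k=1..<K. ring_sizes m K a k)" by simp
  also have "(\<Sum>k=1..<K. ring_sizes m K a k) = (\<Sum>k=1..<K. a * k)"
    by (rule sum.cong) (auto simp: ring_sizes_def)
  finally show ?thesis using assms by (simp add: ring_sizes_def)
qed

lemma sumNk2:
  assumes "1 \<le> K" "1 \<le> a" "(\<Sum>i=1..<K. a * i) < 2^m"
  shows "(\<Sum>k=1..<K. k^3) + K^2 \<le> (\<Sum>k=1..K. ring_sizes m K a k * k^2)"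
proof -
  have "{1..K} = insert K {1..<K}" using assms by auto
  hence "(\<Sum>k=1..K. ring_sizes m K a k * k^2) = ring_sizes m K a K * K^2 + (\<Sum>k=1..<K. ring_sizes m K a k * k^2)" by simp
  also have "(\<Sum>k=1..<K. ring_sizes m K a k * k^2) = (\<Sum>k=1..<K. a * k^3)"
    by (rule sum.cong) (auto simp: ring_sizes_def power2_eq_square power3_eq_cube)
  also have "(\<Sum>k=1..<K. a * k^3) \<ge> (\<Sum>k=1..<K. k^3)"
    by (rule sum_mono) (use assms in simp)
  moreover have "ring_sizes m K a K * K^2 \<ge> K^2" using assms by (simp add: ring_sizes_def)
  ultimately show ?thesis by linarith
qed

lemma norm_ofr_cis: "cmod (complex_of_real r * cis t) = \<bar>r\<bar>"
  by (simp add: norm_mult)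

lemma chord_lower:
  assumes "0 \<le> r" "n1 < N" "n2 < N" "n1 \<noteq> n2"
  shows "2 * r / real N \<le> cmod (complex_of_real r * cis (p + 2 * pi * real n1 / real N)
                                 - complex_of_real r * cis (p + 2 * pi * real n2 / real N))"
proof -
  have "complex_of_real r * cis (p + 2 * pi * real n1 / real N) - complex_of_real r * cis (p + 2 * pi * real n2 / real N)
     = complex_of_real r * (cis (p + 2 * pi * real n1 / real N) - cis (p + 2 * pi * real n2 / real N))"
    by (simp add: algebra_simps)
  hence "cmod (complex_of_real r * cis (p + 2 * pi * real n1 / real N) - complex_of_real r * cis (p + 2 * pi * real n2 / real N))
     = r * (2 * \<bar>sin (((p + 2 * pi * real n1 / real N) - (p + 2 * pi * real n2 / real N)) / 2)\<bar>)"
    using assms by (simp add: norm_mult cis_diff_norm)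
  also have "((p + 2 * pi * real n1 / real N) - (p + 2 * pi * real n2 / real N)) / 2
      = pi * real_of_int (int n1 - int n2) / real N"
    using assms(2) by (simp add: field_simps)
  also have "1 / real N \<le> \<bar>sin (pi * real_of_int (int n1 - int n2) / real N)\<bar>"
    using assms by (intro sin_int_lower) auto
  hence "r * (1 / real N) \<le> r * \<bar>sin (pi * real_of_int (int n1 - int n2) / real N)\<bar>"
    using assms(1) by (rule mult_left_mono)
  hence "2 * r / real N \<le> r * (2 * \<bar>sin (pi * real_of_int (int n1 - int n2) / real N)\<bar>)"
    by simp
  ultimately show ?thesis by simp
qed

lemma radial_lower:
  "\<bar>r1 - r2\<bar> \<le> cmod (complex_of_real r1 * cis t1 - complex_of_real r2 * cis t2)"
  if "0 \<le> r1" "0 \<le> r2"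
  using norm_triangle_ineq3[of "complex_of_real r1 * cis t1" "complex_of_real r2 * cis t2"] that
  by (simp add: norm_mult)

lemma mem_apsk: "x \<in> apsk K N r phi \<longleftrightarrow>
   (\<exists>k\<in>{1..K}. \<exists>n<N k. x = complex_of_real (r k) * cis (phi k + 2 * pi * real n / real (N k)))"
  unfolding apsk_def by blast

lemma dist_lower:
  assumes "x \<in> apsk K N r phi" "y \<in> apsk K N r phi" "x \<noteq> y"
    and "\<forall>k\<in>{1..K}. 0 \<le> r k"
    and "\<forall>j\<in>{1..K}. \<forall>k\<in>{1..K}. j \<noteq> k \<longrightarrow> \<delta> \<le> \<bar>r j - r k\<bar>"
    and "\<forall>k\<in>{1..K}. \<delta> \<le> 2 * r k / real (N k)"
  shows "\<delta> \<le> cmod (x - y)"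
proof -
  obtain j n1 where j: "j \<in> {1..K}" "n1 < N j" "x = complex_of_real (r j) * cis (phi j + 2 * pi * real n1 / real (N j))"
    using assms(1) mem_apsk by blast
  obtain k n2 where k: "k \<in> {1..K}" "n2 < N k" "y = complex_of_real (r k) * cis (phi k + 2 * pi * real n2 / real (N k))"
    using assms(2) mem_apsk by blast
  show ?thesis
  proof (cases "j = k")
    case True
    then have "n1 \<noteq> n2" using j k assms(3) by auto
    then have "2 * r k / real (N k) \<le> cmod (x - y)"
      using chord_lower[of "r k" n1 "N k" n2 "phi k"] j k True assms(4) by simp
    then show ?thesis using assms(6) k(1) by fastforce
  next
    case False
    then have "\<delta> \<le> \<bar>r j - r k\<bar>" using assms(5) j k by blast
    moreover have "\<bar>r j - r k\<bar> \<le> cmod (x - y)" using radial_lower assms(4) j k by simp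
    ultimately show ?thesis by linarith
  qed
qed



lemma core:
  fixes K a m :: nat and rt phi :: "nat \<Rightarrow> real"
  defines "N \<equiv> ring_sizes m K a"
  defines "s \<equiv> sqrt ((2::real) ^ m)"
  assumes m2: "2 \<le> m"
    and cK: "0 < cK1" "0 < cK2" "cK1 * s \<le> real K" "real K \<le> cK2 * s"
    and cr: "0 < cr1" "0 < cr2" "\<forall>k\<in>{1..K}. cr1 * real k / s \<le> rt k \<and> rt k \<le> cr2 * real k / s"
    and g: "0 < g1" "0 < g2" "\<forall>k\<in>{1..<K}. g1 / s \<le> rt (k + 1) - rt k \<and> rt (k + 1) - rt k \<le> g2 / s"
    and apos: "0 < a"
    and Slt: "(\<Sum>i=1..<K. a * i) < 2 ^ m"
    and cL: "0 < cL2" "real (N K) \<le> cL2 * real K"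
    and ph: "\<forall>k\<in>{1..<K}. phi (k + 1) - phi k = 0"
  shows "(min g1 (min (cr1 * cK1^2 / 2) (2 * cr1 / cL2)) / sqrt ((cr2 * cK2)^2))^2 / 2^m
            \<le> (dmin (apsk K N (apsk_radii m K N rt) phi))^2
       \<and> (dmin (apsk K N (apsk_radii m K N rt) phi))^2
            \<le> (max g2 (2 * pi * cr2) / sqrt (cr1^2 * cK1^4 / 64))^2 / 2^m"
proof -
  define E where "E = apsk_E0 m K N rt"
  define r where "r = apsk_radii m K N rt"
  define X where "X = apsk K N r phi"
  define Eu where "Eu = (cr2 * cK2)^2"
  define El where "El = cr1^2 * cK1^4 / 64"
  define \<delta>0 where "\<delta>0 = min g1 (min (cr1 * cK1^2 / 2) (2 * cr1 / cL2))"
  define u0 where "u0 = max g2 (2 * pi * cr2)"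
  define M where "M = (2::real)^m"
  have M4: "4 \<le> M" unfolding M_def using power_increasing[OF m2, of "2::real"] by simp
  have s0: "0 < s" unfolding s_def by simp
  have ss: "s^2 = M" unfolding s_def M_def by simp
  have K1: "1 \<le> K"
  proof -
    have "0 < cK1 * s" using cK s0 by simp
    then show ?thesis using cK(3) by linarith
  qed
  have Nk: "N k = a * k" if "k < K" for k using that by (simp add: N_def ring_sizes_def)
  have NK: "N K = 2^m - (\<Sum>i=1..<K. a * i)" by (simp add: N_def ring_sizes_def)
  have NK1: "1 \<le> N K" using NK Slt by simp
  have sumN: "(\<Sum>k=1..K. real (N k)) = M"
  proof -
    have "(\<Sum>k=1..K. N k) = 2^m" unfolding N_def using sumN[OF K1] Slt by simp
    hence "real (\<Sum>k=1..K. N k) = M" unfolding M_def by simp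
    thus ?thesis by simp
  qed
  have rtpos: "0 < rt k" if "k \<in> {1..K}" for k
  proof -
    have "0 < cr1 * real k / s" using cr(1) s0 that by simp
    thus ?thesis using cr(3) that by fastforce
  qed
  have E_def': "E = (1 / M) * (\<Sum>k=1..K. real (N k) * (rt k)^2)"
    unfolding E_def apsk_E0_def M_def by simp
  have rtup: "(rt k)^2 \<le> Eu" if "k \<in> {1..K}" for k
  proof -
    have "rt k \<le> cr2 * real k / s" using cr(3) that by blast
    also have "\<dots> \<le> cr2 * real K / s"
      using that cr(2) s0 by (intro divide_right_mono mult_left_mono) auto
    also have "\<dots> \<le> cr2 * cK2"
    proof -
      have "real K / s \<le> cK2" using cK(4) s0 by (simp add: pos_divide_le_eq)
      hence "cr2 * (real K / s) \<le> cr2 * cK2" using cr(2) by (intro mult_left_mono) auto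
      thus ?thesis by simp
    qed
    finally have "rt k \<le> cr2 * cK2" .
    hence "(rt k)^2 \<le> (cr2 * cK2)^2" using rtpos[OF that] by (intro power_mono) auto
    thus ?thesis unfolding Eu_def .
  qed
  have EU: "E \<le> Eu"
  proof -
    have "(\<Sum>k=1..K. real (N k) * (rt k)^2) \<le> (\<Sum>k=1..K. real (N k) * Eu)"
      by (intro sum_mono mult_left_mono rtup) auto
    also have "\<dots> = Eu * (\<Sum>k=1..K. real (N k))" by (simp add: sum_distrib_left mult.commute)
    also have "\<dots> = Eu * M" using sumN by simp
    finally show ?thesis unfolding E_def' using M4 by (simp add: field_simps)
  qed
  have rtlo: "cr1^2 * (real k)^2 / M \<le> (rt k)^2" if "k \<in> {1..K}" for k
  proof -
    have "cr1 * real k / s \<le> rt k" using cr(3) that by blast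
    hence "(cr1 * real k / s)^2 \<le> (rt k)^2" using cr(1) s0 by (intro power_mono) auto
    thus ?thesis using ss by (simp add: power_divide power_mult_distrib)
  qed
  have EL: "El \<le> E"
  proof -
    have "(\<Sum>k=1..K. real (N k) * (cr1^2 * (real k)^2 / M)) \<le> (\<Sum>k=1..K. real (N k) * (rt k)^2)"
      by (intro sum_mono mult_left_mono rtlo) auto
    moreover have "(\<Sum>k=1..K. real (N k) * (cr1^2 * (real k)^2 / M)) = cr1^2 / M * real (\<Sum>k=1..K. N k * k^2)"
      by (simp add: sum_distrib_left algebra_simps)
    moreover have "real K ^ 4 / 64 \<le> real (\<Sum>k=1..K. N k * k^2)"
    proof -
      have "K^4 \<le> 64 * ((\<Sum>k=1..<K. k^3) + K^2)" by (rule quart[OF K1])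
      also have "\<dots> \<le> 64 * (\<Sum>k=1..K. N k * k^2)"
        unfolding N_def using sumNk2[OF K1 _ Slt] apos by simp
      finally have "real (K^4) \<le> real (64 * (\<Sum>k=1..K. N k * k^2))" by (simp only: of_nat_le_iff)
      thus ?thesis by simp
    qed
    moreover have "cK1^4 * M^2 \<le> real K ^ 4"
    proof -
      have "(cK1 * s)^4 \<le> real K ^ 4" using cK s0 by (intro power_mono) auto
      moreover have "(cK1 * s)^4 = cK1^4 * M^2"
      proof -
        have "(s^2)^2 = s^4" by (simp flip: power_mult)
        thus ?thesis using ss by (simp add: power_mult_distrib)
      qed
      ultimately show ?thesis by simp
    qed
    ultimately have "cr1^2 / M * (cK1^4 * M^2 / 64) \<le> (\<Sum>k=1..K. real (N k) * (rt k)^2)"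
    proof -
      assume a1: "(\<Sum>k=1..K. real (N k) * (cr1^2 * (real k)^2 / M)) \<le> (\<Sum>k=1..K. real (N k) * (rt k)^2)"
        and a2: "(\<Sum>k=1..K. real (N k) * (cr1^2 * (real k)^2 / M)) = cr1^2 / M * real (\<Sum>k=1..K. N k * k^2)"
        and a3: "real K ^ 4 / 64 \<le> real (\<Sum>k=1..K. N k * k^2)"
        and a4: "cK1^4 * M^2 \<le> real K ^ 4"
      have "cK1^4 * M^2 / 64 \<le> real (\<Sum>k=1..K. N k * k^2)" using a3 a4 by simp
      hence "cr1^2 / M * (cK1^4 * M^2 / 64) \<le> cr1^2 / M * real (\<Sum>k=1..K. N k * k^2)"
        using M4 by (intro mult_left_mono) auto
      thus ?thesis using a1 a2 by simp
    qed
    hence "1 / M * (cr1^2 / M * (cK1^4 * M^2 / 64)) \<le> E" unfolding E_def' using M4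
      by (intro mult_left_mono) auto
    moreover have "1 / M * (cr1^2 / M * (cK1^4 * M^2 / 64)) = El" unfolding El_def using M4
      by (simp add: power2_eq_square field_simps)
    ultimately show ?thesis by simp
  qed
  have El0: "0 < El" unfolding El_def using cr cK by simp
  have E0: "0 < E" using El0 EL by simp
  have sqE: "sqrt El \<le> sqrt E" "sqrt E \<le> sqrt Eu" using EL EU by simp_all
  have sqEl0: "0 < sqrt El" using El0 by simp
  have r_def': "r k = rt k / sqrt E" for k unfolding r_def E_def apsk_radii_def by simp

  have gapsd: "g1 / s \<le> rt (j + 1 + d) - rt j" if "j \<in> {1..K}" "j + 1 + d \<le> K" for j d
    using that
  proof (induction d)
    case 0
    then show ?case using g(3) by auto
  next
    case (Suc d)
    have "g1 / s \<le> rt (j + 1 + d) - rt j" using Suc by simp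
    moreover have "g1 / s \<le> rt (j + 1 + d + 1) - rt (j + 1 + d)" using g(3) Suc.prems by auto
    moreover have "0 < g1 / s" using g(1) s0 by simp
    ultimately show ?case by simp
  qed
  have gaps: "g1 / s \<le> rt k - rt j" if "j \<in> {1..K}" "k \<in> {1..K}" "j < k" for j k
    using gapsd[OF that(1), of "k - j - 1"] that by simp
  have sep: "\<delta>0 / (s * sqrt Eu) \<le> \<bar>r j - r k\<bar>" if "j \<in> {1..K}" "k \<in> {1..K}" "j \<noteq> k" for j k
  proof -
    have "g1 / s \<le> \<bar>rt j - rt k\<bar>"
    proof (cases "j < k")
      case True then show ?thesis using gaps[OF that(1,2)] by simp
    next
      case False then show ?thesis using gaps[OF that(2,1)] that(3) by simp
    qed
    hence "g1 / s / sqrt Eu \<le> \<bar>rt j - rt k\<bar> / sqrt E"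
      using sqE E0 g(1) s0 by (intro frac_le) auto
    moreover have "\<delta>0 / (s * sqrt Eu) \<le> g1 / s / sqrt Eu"
      unfolding \<delta>0_def using s0 sqE E0 by (simp add: divide_right_mono)
    moreover have "\<bar>r j - r k\<bar> = \<bar>rt j - rt k\<bar> / sqrt E"
      unfolding r_def' using E0 by (simp add: diff_divide_distrib[symmetric])
    ultimately show ?thesis by simp
  qed
  have abound: "real a * cK1^2 \<le> 4" if "2 \<le> K"
  proof -
    have "2 * (\<Sum>i=1..<K. a * i) = a * (K * (K - 1))"
      using gauss2[of K] by (simp add: sum_distrib_left[symmetric])
    hence "a * (K * (K - 1)) < 2 * 2^m" using Slt by simp
    hence "real (a * (K * (K - 1))) < real (2 * 2^m)" by (simp only: of_nat_less_iff)
    hence h1: "real a * (real K * (real K - 1)) < 2 * M" using that unfolding M_def by (simp add: of_nat_diff)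
    have "real a * (real K * real K) \<le> real a * (2 * (real K * (real K - 1)))"
      using that by (intro mult_left_mono) (auto simp: algebra_simps)
    hence h2: "real a * (real K * real K) < 4 * M" using h1 by simp
    have pa: "(cK1 * s)^2 \<le> (real K)^2" using cK s0 by (intro power_mono) auto
    have pb: "cK1^2 * M = (cK1 * s)^2" using ss by (simp add: power_mult_distrib)
    have "cK1^2 * M \<le> (real K)^2" unfolding pb by (rule pa)
    hence "cK1^2 * M \<le> real K * real K" by (simp add: power2_eq_square)
    hence "real a * (cK1^2 * M) \<le> real a * (real K * real K)" by (intro mult_left_mono) auto
    hence "(real a * cK1^2) * M < 4 * M" using h2 by simp
    thus ?thesis using M4 by simp
  qed
  have ringb: "\<delta>0 / (s * sqrt Eu) \<le> 2 * r k / real (N k)" if "k \<in> {1..K}" for k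
  proof -
    have q0: "0 < s * sqrt E" using s0 E0 by simp
    have rk: "cr1 * real k \<le> rt k * s" using cr(3) that s0 by (simp add: pos_divide_le_eq)
    have Nkpos: "0 < N k"
    proof (cases "k < K")
      case True then show ?thesis using Nk apos that by auto
    next
      case False then have "k = K" using that by auto
      then show ?thesis using NK1 by simp
    qed
    have main: "\<delta>0 \<le> 2 * r k / real (N k) * (s * sqrt E)"
    proof -
      have eq: "2 * r k / real (N k) * (s * sqrt E) = 2 * (rt k * s) / real (N k)"
        unfolding r_def' using E0 by (simp add: field_simps)
      have "2 * (cr1 * real k) / real (N k) \<le> 2 * (rt k * s) / real (N k)"
        using rk Nkpos by (intro divide_right_mono) auto
      moreover have "\<delta>0 \<le> 2 * (cr1 * real k) / real (N k)"
      proof (cases "k < K")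
        case True
        have K2: "2 \<le> K" using True that by auto
        have "2 * (cr1 * real k) / real (N k) = 2 * cr1 / real a"
          using Nk[OF True] that apos by (simp add: field_simps)
        moreover have "cr1 * cK1^2 / 2 \<le> 2 * cr1 / real a"
          using abound[OF K2] apos cr(1) by (simp add: field_simps)
        ultimately show ?thesis unfolding \<delta>0_def by simp
      next
        case False then have kK: "k = K" using that by auto
        have "2 * cr1 / cL2 \<le> 2 * (cr1 * real K) / real (N K)"
        proof -
          have "2 * cr1 * real (N K) \<le> 2 * cr1 * (cL2 * real K)"
            using cL(2) cr(1) by (intro mult_left_mono) auto
          thus ?thesis using cL(1) NK1 by (simp add: field_simps)
        qed
        then show ?thesis unfolding \<delta>0_def kK by simp
      qed
      ultimately have "\<delta>0 \<le> 2 * (rt k * s) / real (N k)" by (rule order_trans[rotated])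
      thus ?thesis unfolding eq .
    qed
    hence "\<delta>0 / (s * sqrt E) \<le> 2 * r k / real (N k)" using q0 by (simp add: pos_divide_le_eq)
    moreover have "\<delta>0 / (s * sqrt Eu) \<le> \<delta>0 / (s * sqrt E)"
    proof -
      have "0 \<le> \<delta>0" unfolding \<delta>0_def using g cr cK cL by simp
      moreover have "s * sqrt E \<le> s * sqrt Eu" using sqE s0 by simp
      ultimately show ?thesis using q0 by (intro divide_left_mono) auto
    qed
    ultimately show ?thesis by simp
  qed
  have rnn: "\<forall>k\<in>{1..K}. 0 \<le> r k" using rtpos E0 unfolding r_def' by (simp add: less_imp_le)
  have lower: "\<delta>0 / (s * sqrt Eu) \<le> cmod (x - y)" if "x \<in> X" "y \<in> X" "x \<noteq> y" for x y
    using dist_lower[of x K N r phi y] that rnn sep ringb unfolding X_def by blast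

  have upper: "\<exists>x\<in>X. \<exists>y\<in>X. x \<noteq> y \<and> cmod (x - y) \<le> u0 / (s * sqrt El)"
  proof (cases "2 \<le> K")
    case True
    have N1: "0 < N 1" using Nk[of 1] True apos by simp
    have N2: "0 < N 2"
    proof (cases "2 < K")
      case True then show ?thesis using Nk[of 2] apos by simp
    next
      case False then have "K = 2" using \<open>2 \<le> K\<close> by simp
      then show ?thesis using NK1 by simp
    qed
    define x where "x = complex_of_real (r 1) * cis (phi 1 + 2 * pi * real 0 / real (N 1))"
    define y where "y = complex_of_real (r 2) * cis (phi 2 + 2 * pi * real 0 / real (N 2))"
    have xX: "x \<in> X" unfolding X_def mem_apsk x_def using N1 True by (intro bexI[of _ 1]) auto
    have yX: "y \<in> X" unfolding X_def mem_apsk y_def using N2 True by (intro bexI[of _ 2]) auto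
    have "1 \<in> {1..<K}" using True by simp
    hence "phi (1 + 1) - phi 1 = 0" using ph by blast
    hence ph12: "phi 2 = phi 1" by (simp add: numeral_2_eq_2)
    have "x - y = complex_of_real (r 1 - r 2) * cis (phi 1)" unfolding x_def y_def ph12
      by (simp add: algebra_simps)
    hence dxy: "cmod (x - y) = \<bar>r 1 - r 2\<bar>" by (metis norm_ofr_cis)
    have "g1 / s \<le> rt (1 + 1) - rt 1 \<and> rt (1 + 1) - rt 1 \<le> g2 / s"
      using g(3) \<open>1 \<in> {1..<K}\<close> by blast
    hence g12: "g1 / s \<le> rt 2 - rt 1" "rt 2 - rt 1 \<le> g2 / s" by (simp_all add: numeral_2_eq_2)
    have "0 < g1 / s" using g(1) s0 by simp
    hence pos: "0 < rt 2 - rt 1" using g12(1) by linarith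
    have "r 1 - r 2 = (rt 1 - rt 2) / sqrt E" unfolding r_def' by (simp add: diff_divide_distrib)
    hence "\<bar>r 1 - r 2\<bar> = \<bar>rt 1 - rt 2\<bar> / sqrt E" using E0 by (simp add: abs_divide)
    also have "\<bar>rt 1 - rt 2\<bar> = rt 2 - rt 1" using pos by simp
    finally have rr: "\<bar>r 1 - r 2\<bar> = (rt 2 - rt 1) / sqrt E" .
    have "(rt 2 - rt 1) / sqrt E \<le> (g2 / s) / sqrt El"
      using g12 pos s0 sqE sqEl0 by (intro frac_le) auto
    also have "\<dots> \<le> u0 / (s * sqrt El)" unfolding u0_def using s0 sqEl0
      by (simp add: divide_right_mono)
    finally have close: "cmod (x - y) \<le> u0 / (s * sqrt El)" using dxy rr by simp
    have "0 < (rt 2 - rt 1) / sqrt E" using pos E0 by simp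
    hence "0 < cmod (x - y)" using dxy rr by simp
    hence "x \<noteq> y" by auto
    then show ?thesis using xX yX close by blast
  next
    case False
    hence K1': "K = 1" using K1 by simp
    have N1: "N 1 = 2^m" using NK K1' by simp
    have N1r: "real (N 1) = M" unfolding N1 M_def by simp
    define a1 where "a1 = phi 1 + 2 * pi * real 0 / real (N 1)"
    define b1 where "b1 = phi 1 + 2 * pi * real 1 / real (N 1)"
    define x where "x = complex_of_real (r 1) * cis a1"
    define y where "y = complex_of_real (r 1) * cis b1"
    have "(4::real) \<le> real (N 1)" using N1r M4 by simp
    hence Nge: "2 \<le> N 1" by simp
    have xX: "x \<in> X" unfolding X_def mem_apsk x_def a1_def using Nge K1'
      by (intro bexI[of _ 1] exI[of _ 0]) auto
    have yX: "y \<in> X" unfolding X_def mem_apsk y_def b1_def using Nge K1'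
      by (intro bexI[of _ 1] exI[of _ 1]) auto
    have r1: "0 < r 1" using rtpos[of 1] K1' E0 unfolding r_def' by simp
    have "2 * r 1 / real (N 1) \<le> cmod (x - y)"
      unfolding x_def y_def a1_def b1_def using r1 Nge by (intro chord_lower) auto
    moreover have "0 < 2 * r 1 / real (N 1)" using r1 Nge by simp
    ultimately have "x \<noteq> y" by auto
    have "x - y = complex_of_real (r 1) * (cis a1 - cis b1)" unfolding x_def y_def
      by (simp add: algebra_simps)
    hence "cmod (x - y) = r 1 * (2 * \<bar>sin ((a1 - b1) / 2)\<bar>)"
      using r1 by (simp add: norm_mult cis_diff_norm)
    also have "\<dots> \<le> r 1 * (2 * \<bar>(a1 - b1) / 2\<bar>)"
    proof -
      have "\<bar>sin ((a1 - b1) / 2)\<bar> \<le> \<bar>(a1 - b1) / 2\<bar>" by (rule abs_sin_x_le_abs_x)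
      hence "2 * \<bar>sin ((a1 - b1) / 2)\<bar> \<le> 2 * \<bar>(a1 - b1) / 2\<bar>" by (rule mult_left_mono) simp
      thus ?thesis using r1 by (rule mult_left_mono[OF _ less_imp_le])
    qed
    also have "\<bar>(a1 - b1) / 2\<bar> = pi / real (N 1)" unfolding a1_def b1_def using Nge by simp
    also have "r 1 * (2 * (pi / real (N 1))) \<le> r 1 * (2 * pi)"
    proof -
      have "pi / real (N 1) \<le> pi" using Nge by (simp add: divide_le_eq)
      thus ?thesis using r1 by (intro mult_left_mono) auto
    qed
    also have "r 1 * (2 * pi) \<le> (cr2 / s) / sqrt El * (2 * pi)"
    proof -
      have "rt 1 \<le> cr2 / s" using cr(3) K1' by auto
      hence "rt 1 / sqrt E \<le> (cr2 / s) / sqrt El"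
        using rtpos[of 1] K1' sqE sqEl0 cr(2) s0 by (intro frac_le) auto
      thus ?thesis unfolding r_def' by (intro mult_right_mono) auto
    qed
    also have "\<dots> = (2 * pi * cr2) / (s * sqrt El)" by simp
    also have "\<dots> \<le> u0 / (s * sqrt El)" unfolding u0_def using s0 sqEl0
      by (simp add: divide_right_mono)
    finally have "cmod (x - y) \<le> u0 / (s * sqrt El)" .
    then show ?thesis using xX yX \<open>x \<noteq> y\<close> by blast
  qed
  define D where "D = {cmod (x - y) | x y. x \<in> X \<and> y \<in> X \<and> x \<noteq> y}"
  have dm: "dmin X = Inf D" unfolding dmin_def D_def ..
  obtain x0 y0 where xy0: "x0 \<in> X" "y0 \<in> X" "x0 \<noteq> y0" "cmod (x0 - y0) \<le> u0 / (s * sqrt El)"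
    using upper by blast
  have Dne: "D \<noteq> {}" unfolding D_def using xy0 by blast
  have lowD: "\<delta>0 / (s * sqrt Eu) \<le> dmin X"
    unfolding dm by (rule cInf_greatest[OF Dne]) (auto simp: D_def intro: lower)
  have bdd: "bdd_below D" unfolding D_def by (rule bdd_belowI[of _ 0]) auto
  have "dmin X \<le> cmod (x0 - y0)" unfolding dm
    by (rule cInf_lower[OF _ bdd]) (use xy0 in \<open>auto simp: D_def\<close>)
  hence upD: "dmin X \<le> u0 / (s * sqrt El)" using xy0(4) by simp
  have d0a: "0 \<le> \<delta>0" unfolding \<delta>0_def using g cr cK cL by simp
  have d0b: "0 \<le> s * sqrt Eu" using s0 unfolding Eu_def by simp
  have d0: "0 \<le> \<delta>0 / (s * sqrt Eu)" using d0a d0b by simp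
  have sq1: "(\<delta>0 / (s * sqrt Eu))^2 \<le> (dmin X)^2" using d0 lowD by (intro power_mono) auto
  have sq2: "(dmin X)^2 \<le> (u0 / (s * sqrt El))^2" using d0 lowD upD by (intro power_mono) auto
  have e1: "(\<delta>0 / (s * sqrt Eu))^2 = (\<delta>0 / sqrt Eu)^2 / 2^m"
    using ss unfolding M_def by (simp add: power_divide power_mult_distrib)
  have e2: "(u0 / (s * sqrt El))^2 = (u0 / sqrt El)^2 / 2^m"
    using ss unfolding M_def by (simp add: power_divide power_mult_distrib)
  show ?thesis using sq1 sq2 e1 e2 unfolding X_def r_def \<delta>0_def u0_def Eu_def El_def by simp
qed
theorem proposition1:
  fixes K :: "nat \<Rightarrow> nat" and a :: "nat \<Rightarrow> nat"
    and rt :: "nat \<Rightarrow> nat \<Rightarrow> real" and phi :: "nat \<Rightarrow> nat \<Rightarrow> real"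
  assumes K_Theta: "\<exists>c1 c2. 0 < c1 \<and> 0 < c2 \<and> (\<forall>m\<ge>2.
             c1 * sqrt (2 ^ m) \<le> real (K m) \<and> real (K m) \<le> c2 * sqrt (2 ^ m))"
    and rt_Theta: "\<exists>c1 c2. 0 < c1 \<and> 0 < c2 \<and> (\<forall>m\<ge>2. \<forall>k\<in>{1..K m}.
             c1 * real k / sqrt (2 ^ m) \<le> rt m k \<and> rt m k \<le> c2 * real k / sqrt (2 ^ m))"
    and gap_Theta: "\<exists>c1 c2. 0 < c1 \<and> 0 < c2 \<and> (\<forall>m\<ge>2. \<forall>k\<in>{1..<K m}.
             c1 / sqrt (2 ^ m) \<le> rt m (k + 1) - rt m k \<and> rt m (k + 1) - rt m k \<le> c2 / sqrt (2 ^ m))"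
    and a_pos: "\<forall>m\<ge>2. 0 < a m"
    and last_pos: "\<forall>m\<ge>2. (\<Sum>i=1..<K m. a m * i) < 2 ^ m"
    and last_Theta: "\<exists>c1 c2. 0 < c1 \<and> 0 < c2 \<and> (\<forall>m\<ge>2.
             c1 * real (K m) \<le> real (ring_sizes m (K m) (a m) (K m)) \<and>
             real (ring_sizes m (K m) (a m) (K m)) \<le> c2 * real (K m))"
    and phase: "\<forall>m\<ge>2. \<forall>k\<in>{1..<K m}. phi m (k + 1) - phi m k = 0"
  shows "\<exists>c1 c2. 0 < c1 \<and> 0 < c2 \<and> (\<forall>m\<ge>2.
           c1 / 2 ^ m \<le> (dmin (apsk (K m) (ring_sizes m (K m) (a m))
                                  (apsk_radii m (K m) (ring_sizes m (K m) (a m)) (rt m)) (phi m)))\<^sup>2 \<and>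
           (dmin (apsk (K m) (ring_sizes m (K m) (a m))
                   (apsk_radii m (K m) (ring_sizes m (K m) (a m)) (rt m)) (phi m)))\<^sup>2 \<le> c2 / 2 ^ m)"
  proof -
  obtain cK1 cK2 where cK: "0 < cK1" "0 < cK2" "\<forall>m\<ge>2.
             cK1 * sqrt (2 ^ m) \<le> real (K m) \<and> real (K m) \<le> cK2 * sqrt (2 ^ m)"
    using K_Theta by blast
  obtain cr1 cr2 where cr: "0 < cr1" "0 < cr2" "\<forall>m\<ge>2. \<forall>k\<in>{1..K m}.
             cr1 * real k / sqrt (2 ^ m) \<le> rt m k \<and> rt m k \<le> cr2 * real k / sqrt (2 ^ m)"
    using rt_Theta by blast
  obtain g1 g2 where g: "0 < g1" "0 < g2" "\<forall>m\<ge>2. \<forall>k\<in>{1..<K m}.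
             g1 / sqrt (2 ^ m) \<le> rt m (k + 1) - rt m k \<and> rt m (k + 1) - rt m k \<le> g2 / sqrt (2 ^ m)"
    using gap_Theta by blast
  obtain cL1 cL2 where cL: "0 < cL1" "0 < cL2" "\<forall>m\<ge>2.
             cL1 * real (K m) \<le> real (ring_sizes m (K m) (a m) (K m)) \<and>
             real (ring_sizes m (K m) (a m) (K m)) \<le> cL2 * real (K m)"
    using last_Theta by blast
  define C1 where "C1 = (min g1 (min (cr1 * cK1^2 / 2) (2 * cr1 / cL2)) / sqrt ((cr2 * cK2)^2))^2"
  define C2 where "C2 = (max g2 (2 * pi * cr2) / sqrt (cr1^2 * cK1^4 / 64))^2"
  have q1: "0 < cr1 * cK1^2 / 2" "0 < 2 * cr1 / cL2" using cr cK cL by simp_all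
  have "0 < min g1 (min (cr1 * cK1^2 / 2) (2 * cr1 / cL2))" using q1 g(1) by simp
  moreover have "0 < sqrt ((cr2 * cK2)^2)" using cr cK by simp
  ultimately have P1: "0 < C1" unfolding C1_def by (intro zero_less_power divide_pos_pos)
  have P2: "0 < C2" unfolding C2_def using g cr cK by simp
  have "\<forall>m\<ge>2. C1 / 2 ^ m \<le> (dmin (apsk (K m) (ring_sizes m (K m) (a m))
                                  (apsk_radii m (K m) (ring_sizes m (K m) (a m)) (rt m)) (phi m)))\<^sup>2 \<and>
           (dmin (apsk (K m) (ring_sizes m (K m) (a m))
                   (apsk_radii m (K m) (ring_sizes m (K m) (a m)) (rt m)) (phi m)))\<^sup>2 \<le> C2 / 2 ^ m"
  proof (intro allI impI)
    fix m :: nat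
    assume m: "2 \<le> m"
    show "C1 / 2 ^ m \<le> (dmin (apsk (K m) (ring_sizes m (K m) (a m))
                                  (apsk_radii m (K m) (ring_sizes m (K m) (a m)) (rt m)) (phi m)))\<^sup>2 \<and>
           (dmin (apsk (K m) (ring_sizes m (K m) (a m))
                   (apsk_radii m (K m) (ring_sizes m (K m) (a m)) (rt m)) (phi m)))\<^sup>2 \<le> C2 / 2 ^ m"
      unfolding C1_def C2_def
    proof (rule core)
      show "2 \<le> m" by (rule m)
      show "0 < cK1" "0 < cK2" "0 < cr1" "0 < cr2" "0 < g1" "0 < g2" "0 < cL2" using cK cr g cL by auto
      show "cK1 * sqrt (2 ^ m) \<le> real (K m)" "real (K m) \<le> cK2 * sqrt (2 ^ m)" using cK(3) m by auto
      show "\<forall>k\<in>{1..K m}. cr1 * real k / sqrt (2 ^ m) \<le> rt m k \<and> rt m k \<le> cr2 * real k / sqrt (2 ^ m)"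
        using cr(3) m by auto
      show "\<forall>k\<in>{1..<K m}. g1 / sqrt (2 ^ m) \<le> rt m (k + 1) - rt m k \<and> rt m (k + 1) - rt m k \<le> g2 / sqrt (2 ^ m)"
        using g(3) m by auto
      show "0 < a m" using a_pos m by auto
      show "(\<Sum>i=1..<K m. a m * i) < 2 ^ m" using last_pos m by auto
      show "real (ring_sizes m (K m) (a m) (K m)) \<le> cL2 * real (K m)" using cL(3) m by auto
      show "\<forall>k\<in>{1..<K m}. phi m (k + 1) - phi m k = 0" using phase m by auto
    qed
  qed
  then show ?thesis using P1 P2 by blast
qed

end
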